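(* Assume (A1). Let $x\in\mathcal{C}$ and $\beta>\max\{\beta_2(x),\beta_3(x)\}$, and assume $\|\nabla g(x)\|\le\varepsilon_1$. If $\nabla^2g(x)\succeq-\varepsilon_2\mathrm{Id}$, then $x$ is an $(\varepsilon_1,2\varepsilon_1,\varepsilon_2+C(x)\varepsilon_1)$-approximate second-order critical point of $\min f(x)$ s.t. $h(x)=0$; in particular $$\mathrm{Hess}_{\mathcal{M}_x}f(x)\succeq-(\varepsilon_2+C(x)\varepsilon_1)\mathrm{Id},$$ where $C(x)=2\big\|\mathrm{D}(y\mapsto\mathrm{D}h(y)^* )(x)\big\|_{\mathrm{op}}/\sigma_{\min}(\mathrm{D}h(x))+\big\|\mathrm{D}(y\mapsto\mathrm{D}\lambda(y)^* )(x)\big\|_{\mathrm{op}}$.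
   Context: Let $\mathcal{E}$ be a Euclidean space with inner product $\langle\cdot,\cdot\rangle$ and norm $\|\cdot\|$ (2-norm on $\mathbb{R}^m$), and $f\colon\mathcal{E}\to\mathbb{R}$, $h=(h_1,\dots,h_m)\colon\mathcal{E}\to\mathbb{R}^m$ be $C^\infty$. $\mathrm{D}h(x)$ is the differential, $\mathrm{D}h(x)^*$ its adjoint, $\sigma_{\min}=\sigma_m$ the $m$-th singular value. $\mathcal{D}=\{x:\operatorname{rank}\mathrm{D}h(x)=m\}$; for $x\in\mathcal{D}$, $\lambda(x)=(\mathrm{D}h(x)^* )^\dagger[\nabla f(x)]$ (Moore–Penrose), smooth on $\mathcal{D}$. For $\beta\ge0$, $g(x)=f(x)-\langle h(x),\lambda(x)\rangle+\beta\|h(x)\|^2$. For $x\in\mathcal{D}$: $\mathcal{M}_x=\{y:h(y)=h(x)\}$, $\mathrm{Proj}_x$ the orthogonal projector onto $\ker\mathrm{D}h(x)$, $\mathrm{grad}_{\mathcal{M}_x}f(x)=\nabla f(x)-\mathrm{D}h(x)^*[\lambda(x)]$, $\mathrm{Hess}_{\mathcal{M}_x}f(x)=\mathrm{Proj}_x\circ(\nabla^2f(x)-\sum_i\lambda_i(x)\nabla^2h_i(x))\circ\mathrm{Proj}_x$ as an operator on $\ker\mathrm{D}h(x)$. (A1): there are $R,\underline{\sigma}>0$ with $\sigma_{\min}(\mathrm{D}h(x))\ge\underline{\sigma}$ for all $x\in\mathcal{C}=\{x:\|h(x)\|\le R\}$. For $x\in\mathcal{C}$: $C_\lambda(x)=\|\mathrm{D}\lambda(x)\|_{\mathrm{op}}$,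 $\beta_2(x)=C_\lambda(x)/\sigma_{\min}(\mathrm{D}h(x))$, $\beta_3(x)=1/\sigma_{\min}(\mathrm{D}h(x))$. $x\in\mathcal{D}$ is an $(\varepsilon_0,\varepsilon_1,\varepsilon_2)$-approximate second-order critical point if $\|h(x)\|\le\varepsilon_0$, $\|\mathrm{grad}_{\mathcal{M}_x}f(x)\|\le\varepsilon_1$ and $\mathrm{Hess}_{\mathcal{M}_x}f(x)\succeq-\varepsilon_2\mathrm{Id}$. *)

theory Defs
  imports "HOL-Analysis.Analysis"
begin

fun dderivs :: "('a::real_normed_vector \<Rightarrow> 'b::real_normed_vector) \<Rightarrow> 'a list \<Rightarrow> 'a \<Rightarrow> 'b" where
  "dderivs f [] = f"
| "dderivs f (v # vs) = (\<lambda>y. frechet_derivative (dderivs f vs) (at y) v)"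

text \<open>C-infinity on a finite-dimensional space: all iterated derivatives exist
  (and are differentiable, hence continuous) everywhere.\<close>
definition smooth_fun :: "('a::real_normed_vector \<Rightarrow> 'b::real_normed_vector) \<Rightarrow> bool" where
  "smooth_fun f \<longleftrightarrow> (\<forall>vs x. dderivs f vs differentiable (at x))"

definition grad :: "('a::real_inner \<Rightarrow> real) \<Rightarrow> 'a \<Rightarrow> 'a" where
  "grad f x = (THE D. GDERIV f x :> D)"

definition hess :: "('a::real_inner \<Rightarrow> real) \<Rightarrow> 'a \<Rightarrow> 'a \<Rightarrow> 'a" where
  "hess f x = frechet_derivative (grad f) (at x)"

definition pinv :: "('a::real_inner \<Rightarrow> 'b::real_normed_vector) \<Rightarrow> 'b \<Rightarrow> 'a" where
  "pinv A y = (THE z. (\<forall>w. norm (A z - y) \<le> norm (A w - y)) \<and>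
      (\<forall>w. (\<forall>u. norm (A w - y) \<le> norm (A u - y)) \<longrightarrow> norm z \<le> norm w))"

text \<open>k-th singular value (k >= 1) of a linear map A : E -> F, by the
  Courant--Fischer min-max characterization over k-dimensional subspaces of E;
  0 if k exceeds dim E.\<close>
definition sing_val :: "('a::euclidean_space \<Rightarrow> 'b::real_normed_vector) \<Rightarrow> nat \<Rightarrow> real" where
  "sing_val A k = (if k \<le> DIM('a) then
      Sup {Inf {norm (A v) | v. v \<in> V \<and> norm v = 1} | V. subspace V \<and> dim V = k}
    else 0)"

definition orth_proj :: "'a::real_inner set \<Rightarrow> 'a \<Rightarrow> 'a" where
  "orth_proj S v = (THE p. p \<in> S \<and> (\<forall>s\<in>S. inner (v - p) s = 0))"

definition Dh :: "('a::euclidean_space \<Rightarrow> real^'m) \<Rightarrow> 'a \<Rightarrow> 'a \<Rightarrow> real^'m" where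
  "Dh h x = frechet_derivative h (at x)"

definition sigma_min :: "('a::euclidean_space \<Rightarrow> real^'m) \<Rightarrow> 'a \<Rightarrow> real" where
  "sigma_min h x = sing_val (Dh h x) CARD('m)"

definition fullrank_set :: "('a::euclidean_space \<Rightarrow> real^'m) \<Rightarrow> 'a set" where
  "fullrank_set h = {x. dim (range (Dh h x)) = CARD('m)}"

definition lam :: "('a::euclidean_space \<Rightarrow> real) \<Rightarrow> ('a \<Rightarrow> real^'m) \<Rightarrow> 'a \<Rightarrow> real^'m" where
  "lam f h x = pinv (adjoint (Dh h x)) (grad f x)"

definition gfun :: "('a::euclidean_space \<Rightarrow> real) \<Rightarrow> ('a \<Rightarrow> real^'m) \<Rightarrow> real \<Rightarrow> 'a \<Rightarrow> real" where
  "gfun f h \<beta> x = f x - inner (h x) (lam f h x) + \<beta> * (norm (h x))\<^sup>2"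

definition riem_grad :: "('a::euclidean_space \<Rightarrow> real) \<Rightarrow> ('a \<Rightarrow> real^'m) \<Rightarrow> 'a \<Rightarrow> 'a" where
  "riem_grad f h x = grad f x - adjoint (Dh h x) (lam f h x)"

definition riem_hess :: "('a::euclidean_space \<Rightarrow> real) \<Rightarrow> ('a \<Rightarrow> real^'m) \<Rightarrow> 'a \<Rightarrow> 'a \<Rightarrow> 'a" where
  "riem_hess f h x v =
     (let P = orth_proj {w. Dh h x w = 0} in
      P (hess f x (P v) - (\<Sum>i\<in>UNIV. lam f h x $ i *\<^sub>R hess (\<lambda>y. h y $ i) x (P v))))"

definition approx_socp ::
  "('a::euclidean_space \<Rightarrow> real) \<Rightarrow> ('a \<Rightarrow> real^'m) \<Rightarrow> real \<Rightarrow> real \<Rightarrow> real \<Rightarrow> 'a \<Rightarrow> bool" where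
  "approx_socp f h e0 e1 e2 x \<longleftrightarrow>
     x \<in> fullrank_set h \<and> norm (h x) \<le> e0 \<and> norm (riem_grad f h x) \<le> e1 \<and>
     (\<forall>v. Dh h x v = 0 \<longrightarrow> inner v (riem_hess f h x v) \<ge> - e2 * (norm v)\<^sup>2)"

definition C_lam :: "('a::euclidean_space \<Rightarrow> real) \<Rightarrow> ('a \<Rightarrow> real^'m) \<Rightarrow> 'a \<Rightarrow> real" where
  "C_lam f h x = onorm (frechet_derivative (lam f h) (at x))"

definition beta2 :: "('a::euclidean_space \<Rightarrow> real) \<Rightarrow> ('a \<Rightarrow> real^'m) \<Rightarrow> 'a \<Rightarrow> real" where
  "beta2 f h x = C_lam f h x / sigma_min h x"

definition beta3 :: "('a::euclidean_space \<Rightarrow> real^'m) \<Rightarrow> 'a \<Rightarrow> real" where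
  "beta3 h x = 1 / sigma_min h x"

text \<open>C(x) = 2 ||D(y |-> Dh(y)^*)(x)||_op / sigma_min(Dh(x)) + ||D(y |-> Dlambda(y)^*)(x)||_op,
  with y |-> Dh(y)^* viewed as a map into the normed space of bounded linear maps.\<close>
definition C_const :: "('a::euclidean_space \<Rightarrow> real) \<Rightarrow> ('a \<Rightarrow> real^'m) \<Rightarrow> 'a \<Rightarrow> real" where
  "C_const f h x =
     2 * onorm (frechet_derivative (\<lambda>y. Blinfun (adjoint (Dh h y))) (at x)) / sigma_min h x
     + onorm (frechet_derivative (\<lambda>y. Blinfun (adjoint (frechet_derivative (lam f h) (at y)))) (at x))"

end

theory Submission
  imports Defs
begin

coinductive smo :: "'a::real_normed_vector set \<Rightarrow> ('a \<Rightarrow> real) \<Rightarrow> bool" for U where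
  smoI: "(\<And>y. y \<in> U \<Longrightarrow> F differentiable at y) \<Longrightarrow>
     (\<And>v. smo U (\<lambda>y. frechet_derivative F (at y) v)) \<Longrightarrow> smo U F"


lemma smo_diff: "smo U F \<Longrightarrow> y \<in> U \<Longrightarrow> F differentiable at y"
  by (erule smo.cases) auto

lemma smo_D: "smo U F \<Longrightarrow> smo U (\<lambda>y. frechet_derivative F (at y) v)"
  by (erule smo.cases) auto

inductive alg :: "'a::real_normed_vector set \<Rightarrow> ('a \<Rightarrow> real) \<Rightarrow> bool" for U where
  base: "smo U F \<Longrightarrow> alg U F"
| inv: "smo U d \<Longrightarrow> (\<forall>y\<in>U. d y \<noteq> 0) \<Longrightarrow> alg U (\<lambda>y. inverse (d y))"
| const: "alg U (\<lambda>y. c)"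
| add: "alg U F \<Longrightarrow> alg U G \<Longrightarrow> alg U (\<lambda>y. F y + G y)"
| mult: "alg U F \<Longrightarrow> alg U G \<Longrightarrow> alg U (\<lambda>y. F y * G y)"
| cong: "alg U F \<Longrightarrow> (\<forall>y\<in>U. F y = G y) \<Longrightarrow> alg U G"

lemma alg_step:
  assumes U: "open U" and a: "alg U F"
  shows "(\<forall>y\<in>U. F differentiable at y) \<and> (\<forall>v. alg U (\<lambda>y. frechet_derivative F (at y) v))"
  using a
proof induction
  case (base F)
  then show ?case by (auto intro!: alg.base smo_D simp: smo_diff)
next
  case (inv d)
  have dd: "\<And>y. y \<in> U \<Longrightarrow> ((\<lambda>y. inverse (d y)) has_derivative
      (\<lambda>h. - (inverse (d y) * frechet_derivative d (at y) h * inverse (d y)))) (at y)"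
  proof -
    fix y assume y: "y \<in> U"
    have "(d has_derivative frechet_derivative d (at y)) (at y)"
      using inv y smo_diff frechet_derivative_works by blast
    then show "?thesis y" by (rule Deriv.has_derivative_inverse[where f=d, OF inv(2)[rule_format, OF y]])
  qed
  show ?case
  proof (intro conjI ballI allI)
    fix y assume "y \<in> U" then show "(\<lambda>y. inverse (d y)) differentiable at y"
      using dd differentiable_def by blast
  next
    fix v
    have "alg U (\<lambda>y. (-1) * ((inverse (d y) * frechet_derivative d (at y) v) * inverse (d y)))"
      by (intro alg.mult alg.const alg.inv alg.base smo_D inv)
    then show "alg U (\<lambda>y. frechet_derivative (\<lambda>y. inverse (d y)) (at y) v)"
      by (rule alg.cong) (auto simp: frechet_derivative_at[OF dd, symmetric])
  qed
next
  case (const c)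
  then show ?case by (auto intro: alg.const)
next
  case (add F G)
  show ?case
  proof (intro conjI ballI allI)
    fix y assume "y \<in> U" then show "(\<lambda>y. F y + G y) differentiable at y"
      using add by auto
  next
    fix v
    have "alg U (\<lambda>y. frechet_derivative F (at y) v + frechet_derivative G (at y) v)"
      using add by (intro alg.add) auto
    then show "alg U (\<lambda>y. frechet_derivative (\<lambda>y. F y + G y) (at y) v)"
    proof (rule alg.cong, intro ballI)
      fix y assume "y \<in> U"
      then have "((\<lambda>y. F y + G y) has_derivative (\<lambda>v. frechet_derivative F (at y) v + frechet_derivative G (at y) v)) (at y)"
        using add by (intro has_derivative_add) (auto simp: frechet_derivative_works[symmetric])
      then show "frechet_derivative F (at y) v + frechet_derivative G (at y) v = frechet_derivative (\<lambda>y. F y + G y) (at y) v"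
        by (simp add: frechet_derivative_at[symmetric])
    qed
  qed
next
  case (mult F G)
  show ?case
  proof (intro conjI ballI allI)
    fix y assume "y \<in> U" then show "(\<lambda>y. F y * G y) differentiable at y"
      using mult by auto
  next
    fix v
    have "alg U (\<lambda>y. F y * frechet_derivative G (at y) v + frechet_derivative F (at y) v * G y)"
      using mult by (intro alg.add alg.mult) auto
    then show "alg U (\<lambda>y. frechet_derivative (\<lambda>y. F y * G y) (at y) v)"
    proof (rule alg.cong, intro ballI)
      fix y assume "y \<in> U"
      then have "((\<lambda>y. F y * G y) has_derivative (\<lambda>v. F y * frechet_derivative G (at y) v + frechet_derivative F (at y) v * G y)) (at y)"
        using mult by (intro has_derivative_mult) (auto simp: frechet_derivative_works[symmetric])
      then show "F y * frechet_derivative G (at y) v + frechet_derivative F (at y) v * G y = frechet_derivative (\<lambda>y. F y * G y) (at y) v"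
        by (simp add: frechet_derivative_at[symmetric])
    qed
  qed
next
  case (cong F G)
  show ?case
  proof (intro conjI ballI allI)
    fix y assume y: "y \<in> U" then show "G differentiable at y"
      using cong U by (metis differentiable_def has_derivative_transform_within_open)
  next
    fix v
    have "alg U (\<lambda>y. frechet_derivative F (at y) v)" using cong by blast
    then show "alg U (\<lambda>y. frechet_derivative G (at y) v)"
      proof (rule alg.cong, intro ballI)
      fix y assume "y \<in> U"
      then show "frechet_derivative F (at y) v = frechet_derivative G (at y) v"
        using cong U frechet_derivative_transform_within_open by metis
    qed
  qed
qed

lemma alg_smo: assumes "open U" "alg U F" shows "smo U F"
  using assms(2)
proof (coinduction arbitrary: F rule: smo.coinduct)
  case (smo F)
  then show ?case using alg_step[OF assms(1) smo] by auto
qed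

lemma smo_const: "open U \<Longrightarrow> smo U (\<lambda>y. c)"
  by (rule alg_smo) (auto intro: alg.const)

lemma smo_add: "open U \<Longrightarrow> smo U F \<Longrightarrow> smo U G \<Longrightarrow> smo U (\<lambda>y. F y + G y)"
  by (rule alg_smo) (auto intro: alg.add alg.base)

lemma smo_mult: "open U \<Longrightarrow> smo U F \<Longrightarrow> smo U G \<Longrightarrow> smo U (\<lambda>y. F y * G y)"
  by (rule alg_smo) (auto intro: alg.mult alg.base)

lemma smo_inverse: "open U \<Longrightarrow> smo U F \<Longrightarrow> (\<forall>y\<in>U. F y \<noteq> 0) \<Longrightarrow> smo U (\<lambda>y. inverse (F y))"
  by (rule alg_smo) (auto intro: alg.inv)

lemma smo_cong: "open U \<Longrightarrow> smo U F \<Longrightarrow> (\<forall>y\<in>U. F y = G y) \<Longrightarrow> smo U G"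
  by (rule alg_smo) (auto intro: alg.cong alg.base)

lemma smo_diff': "open U \<Longrightarrow> smo U F \<Longrightarrow> smo U G \<Longrightarrow> smo U (\<lambda>y. F y - G y)"
proof -
  assume a: "open U" "smo U F" "smo U G"
  have "smo U (\<lambda>y. F y + (-1) * G y)" using a by (intro smo_add smo_mult smo_const)
  then show ?thesis by (rule smo_cong[OF a(1)]) auto
qed

lemma smo_divide: "open U \<Longrightarrow> smo U F \<Longrightarrow> smo U G \<Longrightarrow> (\<forall>y\<in>U. G y \<noteq> 0) \<Longrightarrow> smo U (\<lambda>y. F y / G y)"
proof -
  assume a: "open U" "smo U F" "smo U G" "\<forall>y\<in>U. G y \<noteq> 0"
  have "smo U (\<lambda>y. F y * inverse (G y))" using a by (intro smo_mult smo_inverse)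
  then show ?thesis by (rule smo_cong[OF a(1)]) (auto simp: divide_inverse)
qed

lemma smo_sum: assumes "open U" "finite I" "\<And>i. i \<in> I \<Longrightarrow> smo U (F i)" shows "smo U (\<lambda>y. \<Sum>i\<in>I. F i y)"
  using assms(2,3) proof (induction I rule: finite_induct)
  case empty then show ?case by (simp add: smo_const assms)
next
  case (insert a I) then show ?case by (simp add: smo_add assms)
qed

lemma smo_prod: assumes "open U" "finite I" "\<And>i. i \<in> I \<Longrightarrow> smo U (F i)" shows "smo U (\<lambda>y. \<Prod>i\<in>I. F i y)"
  using assms(2,3) proof (induction I rule: finite_induct)
  case empty then show ?case by (simp add: smo_const assms)
next
  case (insert a I) then show ?case by (simp add: smo_mult assms)
qed

lemma smooth_smo: assumes "smooth_fun f" shows "smo U f"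
proof -
  have "smo U (dderivs f vs)" for vs
  proof (coinduction arbitrary: vs rule: smo.coinduct)
    case smo
    then show ?case using assms unfolding smooth_fun_def
      by (auto intro!: exI[of _ "_ # vs"])
  qed
  from this[of "[]"] show ?thesis by simp
qed

lemma comp_has_derivative:
  fixes G :: "'a::real_normed_vector \<Rightarrow> real^'m"
  assumes "G differentiable at y"
  shows "((\<lambda>y. G y $ i) has_derivative (\<lambda>v. frechet_derivative G (at y) v $ i)) (at y)"
proof -
  have "(G has_derivative frechet_derivative G (at y)) (at y)" using assms frechet_derivative_works by blast
  from bounded_linear.has_derivative[OF bounded_linear_vec_nth this] show ?thesis .
qed

lemma comp_frechet:
  fixes G :: "'a::real_normed_vector \<Rightarrow> real^'m"
  assumes "G differentiable at y"
  shows "frechet_derivative (\<lambda>y. G y $ i) (at y) v = frechet_derivative G (at y) v $ i"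
proof -
  have "(\<lambda>v. frechet_derivative G (at y) v $ i) = frechet_derivative (\<lambda>y. G y $ i) (at y)"
    by (rule frechet_derivative_at[OF comp_has_derivative[OF assms]])
  then show ?thesis by metis
qed

lemma smooth_comp_smo:
  fixes h :: "'a::real_normed_vector \<Rightarrow> real^'m"
  assumes "smooth_fun h" shows "smo U (\<lambda>y. h y $ i)"
proof -
  have "smo U (\<lambda>y. dderivs h vs y $ i)" for vs
  proof (coinduction arbitrary: vs rule: smo.coinduct)
    case smo
    have d: "\<And>y vs. dderivs h vs differentiable at y" using assms unfolding smooth_fun_def by auto
    show ?case
    proof (intro exI[of _ "\<lambda>y. dderivs h vs y $ i"] conjI refl allI impI disjI1)
      fix y show "(\<lambda>y. dderivs h vs y $ i) differentiable at y"
        using comp_has_derivative[OF d] differentiable_def by blast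
    next
      fix v
      show "\<exists>vs'. (\<lambda>y. frechet_derivative (\<lambda>y. dderivs h vs y $ i) (at y) v) = (\<lambda>y. dderivs h vs' y $ i)"
        by (rule exI[of _ "v # vs"]) (simp add: comp_frechet[OF d])
    qed
  qed
  from this[of "[]"] show ?thesis by simp
qed

definition gr :: "('a::euclidean_space \<Rightarrow> real) \<Rightarrow> 'a \<Rightarrow> 'a" where
  "gr F y = (\<Sum>b\<in>Basis. frechet_derivative F (at y) b *\<^sub>R b)"

lemma gr_inner:
  fixes F :: "'a::euclidean_space \<Rightarrow> real"
  assumes "F differentiable at y"
  shows "frechet_derivative F (at y) v = v \<bullet> gr F y"
proof -
  have lin: "linear (frechet_derivative F (at y))"
    using assms linear_frechet_derivative by blast
  have "frechet_derivative F (at y) v = frechet_derivative F (at y) (\<Sum>b\<in>Basis. (v \<bullet> b) *\<^sub>R b)"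
    by (simp add: euclidean_representation)
  also have "\<dots> = (\<Sum>b\<in>Basis. (v \<bullet> b) * frechet_derivative F (at y) b)"
    by (simp add: linear_sum[OF lin] linear_scale[OF lin])
  also have "\<dots> = v \<bullet> gr F y"
    by (simp add: gr_def inner_sum_right mult.commute)
  finally show ?thesis .
qed

lemma gderiv_gr:
  fixes F :: "'a::euclidean_space \<Rightarrow> real"
  assumes "F differentiable at y"
  shows "GDERIV F y :> gr F y"
proof -
  have "(F has_derivative frechet_derivative F (at y)) (at y)" using assms frechet_derivative_works by blast
  moreover have "frechet_derivative F (at y) = (\<lambda>v. v \<bullet> gr F y)"
    using gr_inner[OF assms] by auto
  ultimately show ?thesis unfolding gderiv_def by simp
qed

lemma grad_gr:
  fixes F :: "'a::euclidean_space \<Rightarrow> real"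
  assumes "F differentiable at y"
  shows "grad F y = gr F y"
  unfolding grad_def
proof (rule the_equality)
  show "GDERIV F y :> gr F y" by (rule gderiv_gr[OF assms])
next
  fix D assume "GDERIV F y :> D"
  then have "(\<lambda>v. v \<bullet> D) = (\<lambda>v. v \<bullet> gr F y)"
    using gderiv_gr[OF assms] unfolding gderiv_def by (rule has_derivative_unique)
  then have "(D - gr F y) \<bullet> D = (D - gr F y) \<bullet> gr F y" by metis
  then have "(D - gr F y) \<bullet> (D - gr F y) = 0" by (simp add: inner_diff_right)
  then show "D = gr F y" by simp
qed

lemma grad_inner:
  fixes F :: "'a::euclidean_space \<Rightarrow> real"
  assumes "F differentiable at y"
  shows "frechet_derivative F (at y) v = v \<bullet> grad F y"
  using gr_inner[OF assms] grad_gr[OF assms] by simp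

lemma grad_has_derivative:
  fixes F :: "'a::euclidean_space \<Rightarrow> real"
  assumes U: "open U" "x \<in> U" and s: "smo U F"
  shows "(grad F has_derivative (\<lambda>v. \<Sum>b\<in>Basis. frechet_derivative (\<lambda>y. frechet_derivative F (at y) b) (at x) v *\<^sub>R b)) (at x)"
proof -
  have "(gr F has_derivative (\<lambda>v. \<Sum>b\<in>Basis. frechet_derivative (\<lambda>y. frechet_derivative F (at y) b) (at x) v *\<^sub>R b)) (at x)"
    unfolding gr_def
    apply (intro has_derivative_sum has_derivative_scaleR_left)
    using smo_diff[OF smo_D[OF s] U(2)] frechet_derivative_works by blast
  then show ?thesis
    by (rule has_derivative_transform_within_open[OF _ U]) (metis grad_gr smo_diff[OF s])
qed

lemma hess_eq:
  fixes F :: "'a::euclidean_space \<Rightarrow> real"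
  assumes U: "open U" "x \<in> U" and s: "smo U F"
  shows "hess F x = (\<lambda>v. \<Sum>b\<in>Basis. frechet_derivative (\<lambda>y. frechet_derivative F (at y) b) (at x) v *\<^sub>R b)"
  unfolding hess_def using frechet_derivative_at[OF grad_has_derivative[OF assms]] by simp

lemma Fd_comp:
  fixes G :: "'a::euclidean_space \<Rightarrow> real^'m"
  assumes "G differentiable at y"
  shows "frechet_derivative G (at y) u $ i = u \<bullet> grad (\<lambda>y. G y $ i) y"
proof -
  have "(\<lambda>y. G y $ i) differentiable at y"
    using comp_has_derivative[OF assms] differentiable_def by blast
  then show ?thesis using comp_frechet[OF assms] grad_inner by metis
qed

lemma adj_fd:
  fixes G :: "'a::euclidean_space \<Rightarrow> real^'m"
  assumes "G differentiable at y"
  shows "adjoint (frechet_derivative G (at y)) = (\<lambda>\<mu>. \<Sum>i\<in>UNIV. (\<mu> $ i) *\<^sub>R grad (\<lambda>y. G y $ i) y)"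
proof (rule adjoint_unique, intro allI)
  fix u :: 'a and \<mu> :: "real^'m"
  have "frechet_derivative G (at y) u \<bullet> \<mu> = (\<Sum>i\<in>UNIV. (u \<bullet> grad (\<lambda>y. G y $ i) y) * \<mu> $ i)"
    by (simp add: inner_vec_def Fd_comp[OF assms])
  also have "\<dots> = u \<bullet> (\<Sum>i\<in>UNIV. (\<mu> $ i) *\<^sub>R grad (\<lambda>y. G y $ i) y)"
    by (simp add: inner_sum_right mult.commute)
  finally show "frechet_derivative G (at y) u \<bullet> \<mu> = u \<bullet> (\<Sum>i\<in>UNIV. (\<mu> $ i) *\<^sub>R grad (\<lambda>y. G y $ i) y)" .
qed

lemma pinv_eq:
  fixes A :: "'b::euclidean_space \<Rightarrow> 'a::euclidean_space"
  assumes lin: "linear A" and orth: "\<And>u. (b - A z) \<bullet> A u = 0"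
    and inj: "\<And>w. A w = 0 \<Longrightarrow> w = 0"
  shows "pinv A b = z"
proof -
  have key: "norm (A w - b) ^ 2 = norm (A (w - z)) ^ 2 + norm (A z - b) ^ 2" for w
  proof -
    have e: "A w - b = A (w - z) + (A z - b)" by (simp add: linear_diff[OF lin])
    have o: "A (w - z) \<bullet> (A z - b) = 0" using orth[of "w - z"]
      by (metis inner_commute inner_minus_left minus_diff_eq neg_equal_0_iff_equal)
    have "norm (A w - b) ^ 2 = (A (w - z) + (A z - b)) \<bullet> (A (w - z) + (A z - b))"
      by (simp only: e power2_norm_eq_inner)
    also have "\<dots> = A (w - z) \<bullet> A (w - z) + (A z - b) \<bullet> (A z - b)"
      using o by (simp only: inner_add_left inner_add_right inner_commute[of "A z - b" "A (w - z)"])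
    finally show ?thesis by (simp add: power2_norm_eq_inner)
  qed
  have min: "norm (A z - b) \<le> norm (A w - b)" for w
  proof -
    have "norm (A z - b) ^ 2 \<le> norm (A w - b) ^ 2" using key[of w] by simp
    then show ?thesis using power2_le_imp_le norm_ge_zero by blast
  qed
  have uniq: "w = z" if "\<forall>u. norm (A w - b) \<le> norm (A u - b)" for w
  proof -
    have "norm (A w - b) \<le> norm (A z - b)" using that by blast
    then have "norm (A w - b) ^ 2 \<le> norm (A z - b) ^ 2" by (simp add: power_mono)
    then have "norm (A (w - z)) ^ 2 = 0" using key[of w] by (smt (verit) zero_le_power2)
    then show "w = z" using inj[of "w - z"] by simp
  qed
  show ?thesis unfolding pinv_def
  proof (rule the_equality)
    show "(\<forall>w. norm (A z - b) \<le> norm (A w - b)) \<and>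
      (\<forall>w. (\<forall>u. norm (A w - b) \<le> norm (A u - b)) \<longrightarrow> norm z \<le> norm w)"
      using min uniq by auto
  next
    fix w assume "(\<forall>wa. norm (A w - b) \<le> norm (A wa - b)) \<and>
      (\<forall>wa. (\<forall>u. norm (A wa - b) \<le> norm (A u - b)) \<longrightarrow> norm w \<le> norm wa)"
    then show "w = z" using uniq by blast
  qed
qed

lemma sing_val_bound:
  fixes A :: "'a::euclidean_space \<Rightarrow> real^'m"
  assumes lin: "linear A" and pos: "sing_val A CARD('m) > 0"
  shows "sing_val A CARD('m) * norm \<mu> \<le> norm (adjoint A \<mu>)"
proof -
  let ?k = "CARD('m)"
  let ?S = "{Inf {norm (A v) | v. v \<in> V \<and> norm v = 1} | V. subspace V \<and> dim V = ?k}"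
  have kle: "?k \<le> DIM('a)" using pos unfolding sing_val_def by (auto split: if_splits)
  then have sv: "sing_val A ?k = Sup ?S" unfolding sing_val_def by simp
  have ne: "?S \<noteq> {}"
  proof -
    obtain T :: "'a set" where "subspace T" "dim T = ?k"
      using choose_subspace_of_subspace[of ?k "UNIV :: 'a set"] kle by auto
    then show ?thesis by blast
  qed
  have cb: "c * norm \<mu> \<le> norm (adjoint A \<mu>)" if c: "c < sing_val A ?k" for c
  proof (cases "c \<le> 0")
    case True then show ?thesis by (meson mult_nonpos_nonneg norm_ge_zero order_trans)
  next
    case False
    then have c0: "c > 0" by simp
    obtain V :: "'a set" where V: "subspace V" "dim V = ?k"
      and cV: "c < Inf {norm (A v) | v. v \<in> V \<and> norm v = 1}"
      using less_cSupD[OF ne, of c] c sv by auto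
    have bnd: "c * norm v \<le> norm (A v)" if v: "v \<in> V" for v
    proof (cases "v = 0")
      case True then show ?thesis by simp
    next
      case False
      let ?u = "v /\<^sub>R norm v"
      have "?u \<in> V" using V(1) v by (simp add: subspace_scale)
      moreover have "norm ?u = 1" using False by simp
      ultimately have "Inf {norm (A v) | v. v \<in> V \<and> norm v = 1} \<le> norm (A ?u)"
        by (intro cInf_lower) (auto intro: bdd_belowI[of _ 0])
      then have "c \<le> norm (A ?u)" using cV by simp
      also have "norm (A ?u) = norm (A v) / norm v"
        using linear_scale[OF lin] by (simp add: divide_inverse)
      finally show ?thesis using False by (simp add: field_simps)
    qed
    have inj: "inj_on A (span V)"
    proof (rule inj_onI)
      fix u w assume "u \<in> span V" "w \<in> span V" "A u = A w"
      moreover have "span V = V" using V(1) span_eq_iff by blast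
      ultimately have "u - w \<in> V" "A (u - w) = 0" using V(1)
        by (auto simp: linear_diff[OF lin] subspace_diff)
      then show "u = w" using bnd[of "u - w"] c0
        by (metis diff_eq_eq mult_le_0_iff norm_eq_zero norm_ge_zero norm_le_zero_iff
            not_less eq_iff_diff_eq_0 add.commute)
    qed
    have "dim (A ` V) = dim V"
      by (rule dim_image_eq[OF lin inj])
    then have "dim (A ` V) = DIM(real^'m)" using V by simp
    then have "span (A ` V) = UNIV" using dim_eq_full by blast
    moreover have "subspace (A ` V)" using linear_subspace_image[OF lin V(1)] .
    ultimately have "A ` V = UNIV" by (metis span_eq_iff)
    then obtain v where v: "v \<in> V" "A v = \<mu>" by (metis UNIV_I imageE)
    have "norm \<mu> ^ 2 = adjoint A \<mu> \<bullet> v"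
      using adjoint_clauses(2)[OF lin, of \<mu> v] v by (simp add: power2_norm_eq_inner)
    also have "\<dots> \<le> norm (adjoint A \<mu>) * norm v" by (rule norm_cauchy_schwarz)
    finally have "c * norm \<mu> ^ 2 \<le> norm (adjoint A \<mu>) * (c * norm v)"
      using c0 by (simp add: mult_left_mono algebra_simps)
    also have "\<dots> \<le> norm (adjoint A \<mu>) * norm \<mu>"
      using bnd[OF v(1)] v(2) by (simp add: mult_left_mono)
    finally have "c * norm \<mu> * norm \<mu> \<le> norm (adjoint A \<mu>) * norm \<mu>"
      by (simp add: power2_eq_square algebra_simps)
    then show ?thesis
      by (cases "\<mu> = 0") (auto simp: mult_le_cancel_right)
  qed
  then show ?thesis
  proof (cases "\<mu> = 0")
    case True then show ?thesis by simp
  next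
    case False
    have "sing_val A ?k \<le> norm (adjoint A \<mu>) / norm \<mu>"
      by (rule dense_le) (use False cb in \<open>simp add: field_simps\<close>)
    then show ?thesis using False by (simp add: field_simps)
  qed
qed

definition gi :: "('a::euclidean_space \<Rightarrow> real^'m) \<Rightarrow> 'm \<Rightarrow> 'a \<Rightarrow> 'a" where
  "gi h i = grad (\<lambda>y. h y $ i)"
definition Mm :: "('a::euclidean_space \<Rightarrow> real^'m) \<Rightarrow> 'a \<Rightarrow> real^'m^'m" where
  "Mm h y = (\<chi> i j. gi h i y \<bullet> gi h j y)"
definition bv :: "('a::euclidean_space \<Rightarrow> real) \<Rightarrow> ('a \<Rightarrow> real^'m) \<Rightarrow> 'a \<Rightarrow> real^'m" where
  "bv f h y = (\<chi> i. gi h i y \<bullet> grad f y)"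
definition lk :: "('a::euclidean_space \<Rightarrow> real) \<Rightarrow> ('a \<Rightarrow> real^'m) \<Rightarrow> 'm \<Rightarrow> 'a \<Rightarrow> real" where
  "lk f h k y = det (\<chi> i j. if j = k then bv f h y $ i else Mm h y $ i $ j) / det (Mm h y)"
definition Lm :: "('a::euclidean_space \<Rightarrow> real) \<Rightarrow> ('a \<Rightarrow> real^'m) \<Rightarrow> 'a \<Rightarrow> real^'m" where
  "Lm f h y = (\<chi> k. lk f h k y)"

lemma gr_inner_gr:
  fixes F G :: "'a::euclidean_space \<Rightarrow> real"
  shows "gr F y \<bullet> gr G y = (\<Sum>b\<in>Basis. frechet_derivative F (at y) b * frechet_derivative G (at y) b)"
proof -
  have "b \<in> Basis \<Longrightarrow> b \<bullet> gr G y = frechet_derivative G (at y) b" for b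
    by (simp add: gr_def inner_sum_right inner_Basis if_distrib cong: if_cong)
  then show ?thesis by (simp add: gr_def inner_sum_left)
qed

lemma smo_grad_inner:
  fixes F G :: "'a::euclidean_space \<Rightarrow> real"
  assumes U: "open U" and F: "smo U F" and G: "smo U G"
  shows "smo U (\<lambda>y. grad F y \<bullet> grad G y)"
proof -
  have "smo U (\<lambda>y. \<Sum>b\<in>Basis. frechet_derivative F (at y) b * frechet_derivative G (at y) b)"
    by (intro smo_sum[OF U] smo_mult[OF U] smo_D F G) auto
  then show ?thesis
    by (rule smo_cong[OF U]) (simp add: grad_gr smo_diff[OF F] smo_diff[OF G] gr_inner_gr)
qed

lemma smooth_diff: "smooth_fun f \<Longrightarrow> f differentiable at y"
  unfolding smooth_fun_def using dderivs.simps(1) by metis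

lemma smo_det:
  fixes A :: "'a::real_normed_vector \<Rightarrow> real^'n^'n"
  assumes U: "open U" and e: "\<And>i j. smo U (\<lambda>y. A y $ i $ j)"
  shows "smo U (\<lambda>y. det (A y))"
  unfolding det_def
  by (intro smo_sum[OF U] smo_mult[OF U] smo_const[OF U] smo_prod[OF U] e) (auto simp: finite_permutations)

lemma smo_if: "smo U F \<Longrightarrow> smo U G \<Longrightarrow> smo U (\<lambda>y. if P then F y else G y)"
  by (cases P) auto

locale sm =
  fixes f :: "'a::euclidean_space \<Rightarrow> real" and h :: "'a \<Rightarrow> real^'m"
  assumes sf: "smooth_fun f" and sh: "smooth_fun h"
begin

lemma smo_h: "smo U (\<lambda>y. h y $ i)" using smooth_comp_smo[OF sh] .
lemma smo_f: "smo U f" using smooth_smo[OF sf] .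
lemma hdiff: "h differentiable at y" using smooth_diff[OF sh] .
lemma fdiff: "f differentiable at y" using smooth_diff[OF sf] .

lemma smo_Mm: "open U \<Longrightarrow> smo U (\<lambda>y. Mm h y $ i $ j)"
  unfolding Mm_def gi_def by (simp add: smo_grad_inner smo_h)

lemma smo_bv: "open U \<Longrightarrow> smo U (\<lambda>y. bv f h y $ i)"
  unfolding bv_def gi_def by (simp add: smo_grad_inner smo_h smo_f)

lemma Dh_comp: "Dh h y u $ i = u \<bullet> gi h i y"
  unfolding Dh_def gi_def by (rule Fd_comp[OF hdiff])

lemma adj_Dh: "adjoint (Dh h y) = (\<lambda>\<mu>. \<Sum>i\<in>UNIV. (\<mu> $ i) *\<^sub>R gi h i y)"
  unfolding Dh_def gi_def by (rule adj_fd[OF hdiff])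

lemma lin_Dh: "linear (Dh h y)"
  unfolding Dh_def using hdiff linear_frechet_derivative by blast

lemma Dh_adj: "Dh h y (adjoint (Dh h y) \<mu>) = Mm h y *v \<mu>"
  by (simp add: vec_eq_iff Dh_comp adj_Dh Mm_def matrix_vector_mult_def inner_sum_left inner_sum_right inner_commute mult.commute)

lemma Dh_grad: "Dh h y (grad f y) = bv f h y"
  by (simp add: vec_eq_iff Dh_comp bv_def inner_commute)

definition "U0 = {y. det (Mm h y) \<noteq> 0}"

lemma open_U0: "open U0"
proof -
  have "smo UNIV (\<lambda>y. det (Mm h y))" by (intro smo_det smo_Mm) auto
  then have "continuous_on UNIV (\<lambda>y. det (Mm h y))"
    by (meson differentiable_imp_continuous_within continuous_at_imp_continuous_on smo_diff UNIV_I)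
  then show ?thesis unfolding U0_def by (rule open_Collect_neq) simp
qed

lemma smo_lk: "smo U0 (lk f h k)"
  unfolding lk_def[abs_def]
  by (intro smo_divide open_U0 smo_det smo_Mm smo_bv) (use open_U0 in \<open>auto simp: U0_def smo_const intro!: smo_if smo_Mm smo_bv\<close>)

lemma inj_M: "det (Mm h y) \<noteq> 0 \<Longrightarrow> Mm h y *v w = 0 \<Longrightarrow> w = 0"
  using det_nz_iff_inj[of "(*v) (Mm h y)"] matrix_vector_mul_linear matrix_of_matrix_vector_mul
  by (metis inj_eq matrix_vector_mult_0_right)

lemma M_Lm: "det (Mm h y) \<noteq> 0 \<Longrightarrow> Mm h y *v Lm f h y = bv f h y"
  using cramer[of "Mm h y" "Lm f h y" "bv f h y"] unfolding Lm_def lk_def by simp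

lemma lam_Lm: assumes "y \<in> U0" shows "lam f h y = Lm f h y"
proof -
  have d: "det (Mm h y) \<noteq> 0" using assms U0_def by simp
  show ?thesis unfolding lam_def
  proof (rule pinv_eq)
    show "linear (adjoint (Dh h y))" by (rule adjoint_linear[OF lin_Dh])
  next
    fix u
    have "(grad f y - adjoint (Dh h y) (Lm f h y)) \<bullet> adjoint (Dh h y) u
        = Dh h y (grad f y - adjoint (Dh h y) (Lm f h y)) \<bullet> u"
      by (rule adjoint_works[OF lin_Dh])
    also have "\<dots> = 0" using M_Lm[OF d]
      by (simp add: linear_diff[OF lin_Dh] Dh_adj Dh_grad)
    finally show "(grad f y - adjoint (Dh h y) (Lm f h y)) \<bullet> adjoint (Dh h y) u = 0" .
  next
    fix w assume "adjoint (Dh h y) w = 0"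
    then have "Mm h y *v w = 0" using Dh_adj[of y w] linear_0[OF lin_Dh] by simp
    then show "w = 0" using inj_M[OF d] by blast
  qed
qed

lemma det_pos:
  assumes "sigma_min h y > 0" shows "det (Mm h y) \<noteq> 0"
proof -
  have "inj ((*v) (Mm h y))"
  proof (rule injI)
    fix a b assume "Mm h y *v a = Mm h y *v b"
    then have e: "Mm h y *v (a - b) = 0" by (simp add: matrix_vector_mult_diff_distrib)
    let ?A = "adjoint (Dh h y)"
    have "?A (a - b) \<bullet> ?A (a - b) = Dh h y (?A (a - b)) \<bullet> (a - b)"
      by (rule adjoint_works[OF lin_Dh])
    also have "\<dots> = 0" using e by (simp add: Dh_adj)
    finally have "?A (a - b) = 0" by simp
    moreover have "sigma_min h y * norm (a - b) \<le> norm (?A (a - b))"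
      using sing_val_bound[OF lin_Dh] assms unfolding sigma_min_def by blast
    ultimately have "norm (a - b) = 0" using assms
      by (metis mult_le_0_iff norm_ge_zero norm_zero not_less order_antisym)
    then show "a = b" by simp
  qed
  then show ?thesis
    using det_nz_iff_inj[of "(*v) (Mm h y)"] matrix_vector_mul_linear matrix_of_matrix_vector_mul by metis
qed

end

definition Lc :: "'m::finite \<Rightarrow> 'a::real_normed_vector \<Rightarrow> (real^'m) \<Rightarrow>\<^sub>L 'a" where
  "Lc i g = blinfun_scaleR_left g o\<^sub>L blinfun_inner_left (axis i 1)"

lemma Lc_apply[simp]: "blinfun_apply (Lc i g) \<mu> = (\<mu> $ i) *\<^sub>R g"
  by (simp add: Lc_def inner_axis)

lemma bl_Lc: "bounded_linear (Lc i)"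
  unfolding Lc_def[abs_def]
  by (rule bounded_linear_compose[OF bounded_bilinear.bounded_linear_left[OF bounded_bilinear_blinfun_compose] bounded_linear_blinfun_scaleR_left])

lemma Blinfun_sum: "Blinfun (\<lambda>\<mu>. \<Sum>i\<in>UNIV. (\<mu> $ i) *\<^sub>R g i) = (\<Sum>i\<in>UNIV. Lc i (g i))"
proof -
  have "blinfun_apply (\<Sum>i\<in>UNIV. Lc i (g i)) = (\<lambda>\<mu>. \<Sum>i\<in>UNIV. (\<mu> $ i) *\<^sub>R g i)"
    by (auto simp: blinfun.sum_left)
  then show ?thesis by (metis blinfun_apply_inverse)
qed

lemma vec_as_sum: "(\<chi> k. c k) = (\<Sum>k\<in>UNIV. c k *\<^sub>R axis k (1::real))"
  by (simp add: vec_eq_iff axis_def if_distrib sum.delta cong: if_cong)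

lemma grad_eqI:
  fixes F :: "'a::euclidean_space \<Rightarrow> real"
  assumes "GDERIV F y :> D" shows "grad F y = D"
proof -
  have "F differentiable at y" using assms unfolding gderiv_def differentiable_def by blast
  then have g: "GDERIV F y :> gr F y" "grad F y = gr F y" using gderiv_gr grad_gr by blast+
  have "(\<lambda>v. v \<bullet> D) = (\<lambda>v. v \<bullet> gr F y)"
    using assms g(1) unfolding gderiv_def by (rule has_derivative_unique)
  then have "(D - gr F y) \<bullet> D = (D - gr F y) \<bullet> gr F y" by metis
  then have "(D - gr F y) \<bullet> (D - gr F y) = 0" by (simp add: inner_diff_right)
  then show ?thesis using g(2) by simp
qed

lemma grad_hess:
  fixes F :: "'a::euclidean_space \<Rightarrow> real"
  assumes "open U" "x \<in> U" "smo U F" shows "(grad F has_derivative hess F x) (at x)"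
  unfolding hess_eq[OF assms] by (rule grad_has_derivative[OF assms])

context sm begin

lemma Lm_has_derivative:
  assumes y: "y \<in> U0"
  shows "(Lm f h has_derivative (\<lambda>v. \<Sum>k\<in>UNIV. frechet_derivative (lk f h k) (at y) v *\<^sub>R axis k 1)) (at y)"
proof -
  have "((\<lambda>y. \<Sum>k\<in>UNIV. lk f h k y *\<^sub>R axis k 1) has_derivative
      (\<lambda>v. \<Sum>k\<in>UNIV. frechet_derivative (lk f h k) (at y) v *\<^sub>R axis k 1)) (at y)"
    by (intro has_derivative_sum has_derivative_scaleR_left)
       (use smo_diff[OF smo_lk y] frechet_derivative_works in blast)
  moreover have "Lm f h = (\<lambda>y. \<Sum>k\<in>UNIV. lk f h k y *\<^sub>R axis k 1)"
    by (rule ext) (simp add: Lm_def vec_as_sum)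
  ultimately show ?thesis by simp
qed

lemma Lm_diff: "y \<in> U0 \<Longrightarrow> Lm f h differentiable at y"
  using Lm_has_derivative differentiable_def by blast

lemma lam_fd: assumes y: "y \<in> U0"
  shows "(lam f h has_derivative frechet_derivative (Lm f h) (at y)) (at y)"
proof -
  have "(Lm f h has_derivative frechet_derivative (Lm f h) (at y)) (at y)"
    using Lm_diff[OF y] frechet_derivative_works by blast
  then show ?thesis
    by (rule has_derivative_transform_within_open[OF _ open_U0 y]) (simp add: lam_Lm)
qed

lemma lam_diff: "y \<in> U0 \<Longrightarrow> lam f h differentiable at y"
  using lam_fd differentiable_def by blast

lemma lam_fd_eq: "y \<in> U0 \<Longrightarrow> frechet_derivative (lam f h) (at y) = frechet_derivative (Lm f h) (at y)"
  using lam_fd frechet_derivative_at by metis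

lemma Lm_comp: "(\<lambda>y. Lm f h y $ i) = lk f h i"
  by (simp add: Lm_def)

lemma adj_lam: "y \<in> U0 \<Longrightarrow> adjoint (frechet_derivative (lam f h) (at y)) = (\<lambda>\<mu>. \<Sum>i\<in>UNIV. (\<mu> $ i) *\<^sub>R grad (lk f h i) y)"
  using adj_fd[OF Lm_diff, of y] by (simp add: lam_fd_eq Lm_comp)

lemma lam_comp: "y \<in> U0 \<Longrightarrow> frechet_derivative (lam f h) (at y) w $ i = frechet_derivative (lk f h i) (at y) w"
  using Fd_comp[OF Lm_diff, of y w i] grad_inner[OF smo_diff[OF smo_lk], of y i w]
  by (simp add: lam_fd_eq Lm_comp)

lemma phi_eq: "Blinfun (adjoint (Dh h y)) = (\<Sum>i\<in>UNIV. Lc i (gi h i y))"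
  by (simp add: adj_Dh Blinfun_sum)

lemma phi_deriv:
  "((\<lambda>y. Blinfun (adjoint (Dh h y))) has_derivative (\<lambda>v. \<Sum>i\<in>UNIV. Lc i (hess (\<lambda>y. h y $ i) x v))) (at x)"
  unfolding phi_eq gi_def
  by (intro has_derivative_sum bounded_linear.has_derivative[OF bl_Lc] grad_hess[of UNIV] smo_h) auto

lemma psi_deriv:
  assumes x: "x \<in> U0"
  shows "((\<lambda>y. Blinfun (adjoint (frechet_derivative (lam f h) (at y)))) has_derivative
     (\<lambda>v. \<Sum>i\<in>UNIV. Lc i (hess (lk f h i) x v))) (at x)"
proof -
  have "((\<lambda>y. \<Sum>i\<in>UNIV. Lc i (grad (lk f h i) y)) has_derivative
     (\<lambda>v. \<Sum>i\<in>UNIV. Lc i (hess (lk f h i) x v))) (at x)"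
    by (intro has_derivative_sum bounded_linear.has_derivative[OF bl_Lc] grad_hess[OF open_U0 x] smo_lk)
  then show ?thesis
    by (rule has_derivative_transform_within_open[OF _ open_U0 x]) (simp add: adj_lam Blinfun_sum)
qed

definition "gf \<beta> y = f y - (\<Sum>i\<in>UNIV. h y $ i * lk f h i y) + \<beta> * (\<Sum>i\<in>UNIV. h y $ i * h y $ i)"

lemma gfun_eq: "y \<in> U0 \<Longrightarrow> gfun f h \<beta> y = gf \<beta> y"
  by (simp add: gfun_def gf_def lam_Lm power2_norm_eq_inner inner_vec_def Lm_def)

definition "Gv \<beta> y = grad f y - (\<Sum>i\<in>UNIV. lk f h i y *\<^sub>R gi h i y + h y $ i *\<^sub>R grad (lk f h i) y)
   + (2 * \<beta>) *\<^sub>R (\<Sum>i\<in>UNIV. h y $ i *\<^sub>R gi h i y)"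

lemma gf_gderiv:
  assumes y: "y \<in> U0"
  shows "GDERIV (gf \<beta>) y :> Gv \<beta> y"
proof -
  have df: "(f has_derivative frechet_derivative f (at y)) (at y)"
    using fdiff frechet_derivative_works by blast
  have dh: "((\<lambda>y. h y $ i) has_derivative frechet_derivative (\<lambda>y. h y $ i) (at y)) (at y)" for i
    using smo_diff[OF smo_h[of UNIV]] frechet_derivative_works by blast
  have dl: "(lk f h i has_derivative frechet_derivative (lk f h i) (at y)) (at y)" for i
    using smo_diff[OF smo_lk y] frechet_derivative_works by blast
  have "(gf \<beta> has_derivative (\<lambda>v. frechet_derivative f (at y) v
       - (\<Sum>i\<in>UNIV. h y $ i * frechet_derivative (lk f h i) (at y) v + frechet_derivative (\<lambda>y. h y $ i) (at y) v * lk f h i y)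
       + \<beta> * (\<Sum>i\<in>UNIV. h y $ i * frechet_derivative (\<lambda>y. h y $ i) (at y) v + frechet_derivative (\<lambda>y. h y $ i) (at y) v * h y $ i))) (at y)"
    unfolding gf_def[abs_def]
    by (intro has_derivative_add has_derivative_diff has_derivative_sum has_derivative_mult
        has_derivative_mult_right df dh dl)
  moreover have "(\<lambda>v. frechet_derivative f (at y) v
       - (\<Sum>i\<in>UNIV. h y $ i * frechet_derivative (lk f h i) (at y) v + frechet_derivative (\<lambda>y. h y $ i) (at y) v * lk f h i y)
       + \<beta> * (\<Sum>i\<in>UNIV. h y $ i * frechet_derivative (\<lambda>y. h y $ i) (at y) v + frechet_derivative (\<lambda>y. h y $ i) (at y) v * h y $ i))
     = (\<lambda>v. v \<bullet> Gv \<beta> y)"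
  proof (rule ext)
    fix v
    have "frechet_derivative (\<lambda>y. h y $ i) (at y) v = v \<bullet> gi h i y" for i
      unfolding gi_def by (rule grad_inner[OF smo_diff[OF smo_h[of UNIV]]]) simp
    moreover have "frechet_derivative (lk f h i) (at y) v = v \<bullet> grad (lk f h i) y" for i
      by (rule grad_inner[OF smo_diff[OF smo_lk y]])
    moreover have "frechet_derivative f (at y) v = v \<bullet> grad f y"
      by (rule grad_inner[OF fdiff])
    ultimately have e: "frechet_derivative f (at y) v
       - (\<Sum>i\<in>UNIV. h y $ i * frechet_derivative (lk f h i) (at y) v + frechet_derivative (\<lambda>y. h y $ i) (at y) v * lk f h i y)
       + \<beta> * (\<Sum>i\<in>UNIV. h y $ i * frechet_derivative (\<lambda>y. h y $ i) (at y) v + frechet_derivative (\<lambda>y. h y $ i) (at y) v * h y $ i)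
       = v \<bullet> grad f y
       - (\<Sum>i\<in>UNIV. h y $ i * (v \<bullet> grad (lk f h i) y) + (v \<bullet> gi h i y) * lk f h i y)
       + \<beta> * (\<Sum>i\<in>UNIV. h y $ i * (v \<bullet> gi h i y) + (v \<bullet> gi h i y) * h y $ i)"
      by simp
    have s1: "(\<Sum>i\<in>UNIV. h y $ i * (v \<bullet> grad (lk f h i) y) + (v \<bullet> gi h i y) * lk f h i y)
       = v \<bullet> (\<Sum>i\<in>UNIV. lk f h i y *\<^sub>R gi h i y + h y $ i *\<^sub>R grad (lk f h i) y)"
      by (simp add: inner_sum_right inner_add_right mult.commute add.commute)
    have s2: "\<beta> * (\<Sum>i\<in>UNIV. h y $ i * (v \<bullet> gi h i y) + (v \<bullet> gi h i y) * h y $ i)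
       = v \<bullet> ((2 * \<beta>) *\<^sub>R (\<Sum>i\<in>UNIV. h y $ i *\<^sub>R gi h i y))"
    proof -
      have "(\<Sum>i\<in>UNIV. h y $ i * (v \<bullet> gi h i y) + (v \<bullet> gi h i y) * h y $ i)
          = 2 * (\<Sum>i\<in>UNIV. h y $ i * (v \<bullet> gi h i y))"
        by (simp add: sum_distrib_left mult.commute)
      then show ?thesis by (simp add: inner_sum_right)
    qed
    show "frechet_derivative f (at y) v
       - (\<Sum>i\<in>UNIV. h y $ i * frechet_derivative (lk f h i) (at y) v + frechet_derivative (\<lambda>y. h y $ i) (at y) v * lk f h i y)
       + \<beta> * (\<Sum>i\<in>UNIV. h y $ i * frechet_derivative (\<lambda>y. h y $ i) (at y) v + frechet_derivative (\<lambda>y. h y $ i) (at y) v * h y $ i)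
       = v \<bullet> Gv \<beta> y"
      unfolding e s1 s2 Gv_def by (simp only: inner_diff_right inner_add_right)
  qed
  ultimately show ?thesis unfolding gderiv_def by simp
qed

lemma grad_gfun: assumes y: "y \<in> U0" shows "grad (gfun f h \<beta>) y = Gv \<beta> y"
proof -
  have "GDERIV (gfun f h \<beta>) y :> Gv \<beta> y"
    using gf_gderiv[OF y] unfolding gderiv_def
    by (rule has_derivative_transform_within_open[OF _ open_U0 y]) (simp add: gfun_eq)
  then show ?thesis by (rule grad_eqI)
qed

lemma Gv_deriv:
  assumes x: "x \<in> U0"
  shows "(Gv \<beta> has_derivative (\<lambda>v. hess f x v
     - (\<Sum>i\<in>UNIV. (lk f h i x *\<^sub>R hess (\<lambda>y. h y $ i) x v + frechet_derivative (lk f h i) (at x) v *\<^sub>R gi h i x)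
                 + (h x $ i *\<^sub>R hess (lk f h i) x v + frechet_derivative (\<lambda>y. h y $ i) (at x) v *\<^sub>R grad (lk f h i) x))
     + (2 * \<beta>) *\<^sub>R (\<Sum>i\<in>UNIV. h x $ i *\<^sub>R hess (\<lambda>y. h y $ i) x v + frechet_derivative (\<lambda>y. h y $ i) (at x) v *\<^sub>R gi h i x))) (at x)"
proof -
  have dh: "((\<lambda>y. h y $ i) has_derivative frechet_derivative (\<lambda>y. h y $ i) (at x)) (at x)" for i
    using smo_diff[OF smo_h[of UNIV]] frechet_derivative_works by blast
  have dl: "(lk f h i has_derivative frechet_derivative (lk f h i) (at x)) (at x)" for i
    using smo_diff[OF smo_lk x] frechet_derivative_works by blast
  have gh: "(gi h i has_derivative hess (\<lambda>y. h y $ i) x) (at x)" for i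
    unfolding gi_def by (rule grad_hess[of UNIV]) (auto simp: smo_h)
  have gl: "(grad (lk f h i) has_derivative hess (lk f h i) x) (at x)" for i
    by (rule grad_hess[OF open_U0 x smo_lk])
  have gfd: "(grad f has_derivative hess f x) (at x)"
    by (rule grad_hess[of UNIV]) (auto simp: smo_f)
  show ?thesis
    unfolding Gv_def[abs_def]
    by (intro has_derivative_add has_derivative_diff has_derivative_sum has_derivative_scaleR
        has_derivative_scaleR_right dh dl gh gl gfd)
qed

lemma hess_gfun: assumes x: "x \<in> U0"
  shows "hess (gfun f h \<beta>) x = (\<lambda>v. hess f x v
     - (\<Sum>i\<in>UNIV. (lk f h i x *\<^sub>R hess (\<lambda>y. h y $ i) x v + frechet_derivative (lk f h i) (at x) v *\<^sub>R gi h i x)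
                 + (h x $ i *\<^sub>R hess (lk f h i) x v + frechet_derivative (\<lambda>y. h y $ i) (at x) v *\<^sub>R grad (lk f h i) x))
     + (2 * \<beta>) *\<^sub>R (\<Sum>i\<in>UNIV. h x $ i *\<^sub>R hess (\<lambda>y. h y $ i) x v + frechet_derivative (\<lambda>y. h y $ i) (at x) v *\<^sub>R gi h i x))"
proof -
  have "(grad (gfun f h \<beta>) has_derivative (\<lambda>v. hess f x v
     - (\<Sum>i\<in>UNIV. (lk f h i x *\<^sub>R hess (\<lambda>y. h y $ i) x v + frechet_derivative (lk f h i) (at x) v *\<^sub>R gi h i x)
                 + (h x $ i *\<^sub>R hess (lk f h i) x v + frechet_derivative (\<lambda>y. h y $ i) (at x) v *\<^sub>R grad (lk f h i) x))
     + (2 * \<beta>) *\<^sub>R (\<Sum>i\<in>UNIV. h x $ i *\<^sub>R hess (\<lambda>y. h y $ i) x v + frechet_derivative (\<lambda>y. h y $ i) (at x) v *\<^sub>R gi h i x))) (at x)"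
    using Gv_deriv[OF x]
    by (rule has_derivative_transform_within_open[OF _ open_U0 x]) (simp add: grad_gfun)
  then show ?thesis unfolding hess_def by (rule frechet_derivative_at[symmetric])
qed

end

lemma orth_proj_eq:
  fixes S :: "'a::euclidean_space set"
  assumes S: "subspace S" and p: "p \<in> S" and o: "\<forall>s\<in>S. (w - p) \<bullet> s = 0"
  shows "orth_proj S w = p"
  unfolding orth_proj_def
proof (rule the_equality)
  show "p \<in> S \<and> (\<forall>s\<in>S. (w - p) \<bullet> s = 0)" using p o by blast
next
  fix q assume q: "q \<in> S \<and> (\<forall>s\<in>S. (w - q) \<bullet> s = 0)"
  have d: "p - q \<in> S" using S p q by (simp add: subspace_diff)
  have "(w - p) \<bullet> (p - q) = 0" "(w - q) \<bullet> (p - q) = 0" using o q d by auto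
  then have "(p - q) \<bullet> (p - q) = 0" by (simp add: inner_diff_left)
  then show "q = p" by simp
qed

lemma orth_proj_ex:
  fixes S :: "'a::euclidean_space set"
  assumes S: "subspace S"
  shows "\<exists>p\<in>S. \<forall>s\<in>S. (w - p) \<bullet> s = 0"
proof -
  obtain y z where "y \<in> span S" "\<And>u. u \<in> span S \<Longrightarrow> orthogonal z u" "w = y + z"
    using orthogonal_subspace_decomp_exists by blast
  moreover have "span S = S" using S span_eq_iff by blast
  ultimately show ?thesis unfolding orthogonal_def by (intro bexI[of _ y]) auto
qed

lemma orth_proj_inner:
  fixes S :: "'a::euclidean_space set"
  assumes S: "subspace S" and v: "v \<in> S"
  shows "v \<bullet> orth_proj S w = v \<bullet> w" and "orth_proj S v = v"
proof -
  obtain p where p: "p \<in> S" "\<forall>s\<in>S. (w - p) \<bullet> s = 0" using orth_proj_ex[OF S] by blast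
  have "orth_proj S w = p" by (rule orth_proj_eq[OF S p])
  moreover have "(w - p) \<bullet> v = 0" using p v by blast
  ultimately show "v \<bullet> orth_proj S w = v \<bullet> w" by (simp add: inner_diff_left inner_diff_right inner_commute)
  show "orth_proj S v = v" by (rule orth_proj_eq[OF S v]) simp
qed


theorem mainTheorem4:
  fixes f :: "'a::euclidean_space \<Rightarrow> real" and h :: "'a \<Rightarrow> real^'m"
    and R \<sigma> \<beta> \<epsilon>1 \<epsilon>2 :: real and x :: 'a
  assumes "smooth_fun f" and "smooth_fun h"
    and A1: "R > 0" "\<sigma> > 0" "\<forall>y. norm (h y) \<le> R \<longrightarrow> sigma_min h y \<ge> \<sigma>"
    and "\<beta> \<ge> 0"
    and "norm (h x) \<le> R"
    and "\<beta> > max (beta2 f h x) (beta3 h x)"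
    and "norm (grad (gfun f h \<beta>) x) \<le> \<epsilon>1"
    and "\<forall>v. inner v (hess (gfun f h \<beta>) x v) \<ge> - \<epsilon>2 * (norm v)\<^sup>2"
  shows "approx_socp f h \<epsilon>1 (2 * \<epsilon>1) (\<epsilon>2 + C_const f h x * \<epsilon>1) x"
proof -
  interpret sm f h using assms(1,2) by unfold_locales
  define s where "s = sigma_min h x"
  have s_pos: "s > 0" using A1 assms(7) unfolding s_def by force
  have xU: "x \<in> U0" using det_pos[of x] s_pos unfolding s_def U0_def by simp
  have lamx: "lam f h x = Lm f h x" by (rule lam_Lm[OF xU])
  have dM: "det (Mm h x) \<noteq> 0" using xU U0_def by simp
  define a where "a = (\<Sum>i\<in>UNIV. h x $ i *\<^sub>R gi h i x)"
  define c where "c = (\<Sum>i\<in>UNIV. h x $ i *\<^sub>R grad (lk f h i) x)"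
  define r where "r = riem_grad f h x"
  define E where "E = grad (gfun f h \<beta>) x"
  define Cl where "Cl = C_lam f h x"
  have E_le: "norm E \<le> \<epsilon>1" using assms(9) E_def by simp
  have r_eq: "r = grad f x - (\<Sum>i\<in>UNIV. lk f h i x *\<^sub>R gi h i x)"
    unfolding r_def riem_grad_def by (simp add: adj_Dh lamx Lm_def)
  have E_eq: "E = r - c + (2 * \<beta>) *\<^sub>R a"
    unfolding E_def grad_gfun[OF xU] Gv_def r_eq c_def a_def by (simp add: sum.distrib algebra_simps)
  have r_orth: "r \<bullet> gi h j x = 0" for j
  proof -
    have "(Mm h x *v Lm f h x) $ j = bv f h x $ j" using M_Lm[OF dM] by simp
    then have "(\<Sum>i\<in>UNIV. (gi h j x \<bullet> gi h i x) * lk f h i x) = gi h j x \<bullet> grad f x"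
      by (simp add: Mm_def bv_def matrix_vector_mult_def Lm_def)
    then have e: "(\<Sum>i\<in>UNIV. lk f h i x * (gi h i x \<bullet> gi h j x)) = grad f x \<bullet> gi h j x"
      by (simp add: inner_commute mult.commute)
    have "r \<bullet> gi h j x = grad f x \<bullet> gi h j x - (\<Sum>i\<in>UNIV. lk f h i x * (gi h i x \<bullet> gi h j x))"
      unfolding r_eq by (simp add: inner_diff_left inner_sum_left)
    then show ?thesis using e by simp
  qed
  have ra: "r \<bullet> a = 0" unfolding a_def by (simp add: inner_sum_right r_orth)
  have a_adj: "a = adjoint (Dh h x) (h x)" by (simp add: a_def adj_Dh)
  have a_bound: "s * norm (h x) \<le> norm a"
    unfolding a_adj s_def by (rule sing_val_bound[OF lin_Dh, unfolded sigma_min_def[symmetric]]) (use s_pos s_def in simp)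
  have bl_lam: "bounded_linear (frechet_derivative (lam f h) (at x))"
    using lam_diff[OF xU] frechet_derivative_works has_derivative_bounded_linear by blast
  have Cl_nn: "Cl \<ge> 0" unfolding Cl_def C_lam_def by (rule onorm_pos_le[OF bl_lam])
  have c_bound: "norm c \<le> Cl * norm (h x)"
  proof -
    have "c \<bullet> c = h x \<bullet> frechet_derivative (lam f h) (at x) c"
      unfolding c_def[of] by (simp add: inner_sum_left inner_vec_def lam_comp[OF xU]
          grad_inner[OF smo_diff[OF smo_lk xU]] inner_commute)
    also have "\<dots> \<le> norm (h x) * norm (frechet_derivative (lam f h) (at x) c)"
      by (rule norm_cauchy_schwarz)
    also have "\<dots> \<le> norm (h x) * (Cl * norm c)"
      unfolding Cl_def C_lam_def by (intro mult_left_mono onorm[OF bl_lam]) simp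
    finally have "norm c * norm c \<le> (Cl * norm (h x)) * norm c"
      by (simp add: power2_norm_eq_inner[symmetric] power2_eq_square algebra_simps)
    then show ?thesis
      by (cases "c = 0") (auto simp: mult_le_cancel_right Cl_nn)
  qed
  have key1: "(2 * \<beta> * s - Cl) * norm (h x) \<le> \<epsilon>1"
  proof (cases "a = 0")
    case True
    then have "norm (h x) = 0" using a_bound s_pos
      by (metis mult_le_0_iff norm_ge_zero norm_zero order_antisym not_less)
    moreover have "0 \<le> \<epsilon>1" using E_le norm_ge_zero[of E] by linarith
    ultimately show ?thesis by simp
  next
    case False
    have "E \<bullet> a = 2 * \<beta> * (a \<bullet> a) - c \<bullet> a"
      unfolding E_eq by (simp add: inner_diff_left inner_add_left ra)
    then have "2 * \<beta> * (norm a * norm a) = E \<bullet> a + c \<bullet> a"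
      by (simp add: power2_norm_eq_inner[symmetric] power2_eq_square)
    also have "\<dots> \<le> norm E * norm a + norm c * norm a"
      by (intro add_mono norm_cauchy_schwarz)
    also have "\<dots> \<le> (\<epsilon>1 + Cl * norm (h x)) * norm a"
      using E_le c_bound by (simp add: distrib_right mult_right_mono add_mono)
    finally have "2 * \<beta> * norm a * norm a \<le> (\<epsilon>1 + Cl * norm (h x)) * norm a"
      by (simp add: mult.assoc)
    then have "2 * \<beta> * norm a \<le> \<epsilon>1 + Cl * norm (h x)"
      using False by (simp add: mult_le_cancel_right)
    moreover have "2 * \<beta> * (s * norm (h x)) \<le> 2 * \<beta> * norm a"
      using a_bound assms(6) by (simp add: mult_left_mono)
    ultimately show ?thesis by (simp add: algebra_simps)
  qed
  have key2: "norm r \<le> \<epsilon>1 + Cl * norm (h x)"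
  proof -
    have re: "r = E + c - (2 * \<beta>) *\<^sub>R a" using E_eq by simp
    have "r \<bullet> r = r \<bullet> E + r \<bullet> c - (2 * \<beta>) * (r \<bullet> a)"
      by (subst (2) re) (simp add: inner_diff_right inner_add_right)
    then have "r \<bullet> r = r \<bullet> E + r \<bullet> c" using ra by simp
    also have "\<dots> \<le> norm r * norm E + norm r * norm c"
      by (intro add_mono norm_cauchy_schwarz)
    also have "\<dots> \<le> norm r * (\<epsilon>1 + Cl * norm (h x))"
      using E_le c_bound by (simp add: distrib_left mult_left_mono add_mono)
    finally have "norm r * norm r \<le> norm r * (\<epsilon>1 + Cl * norm (h x))"
      by (simp add: power2_norm_eq_inner[symmetric] power2_eq_square)
    moreover have "0 \<le> \<epsilon>1 + Cl * norm (h x)"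
    proof -
      have "0 \<le> Cl * norm (h x)" using Cl_nn by simp
      moreover have "0 \<le> \<epsilon>1" using E_le norm_ge_zero[of E] by linarith
      ultimately show ?thesis by linarith
    qed
    ultimately show ?thesis
      by (cases "norm r = 0") (simp, simp add: mult_le_cancel_left_pos)
  qed
  have b2: "\<beta> * s > Cl" and b3: "\<beta> * s > 1"
    using assms(8) s_pos unfolding beta2_def beta3_def Cl_def s_def
    by (auto simp: field_simps)
  have nh: "norm (h x) \<le> \<epsilon>1"
  proof -
    have "1 \<le> 2 * \<beta> * s - Cl" using b2 b3 by linarith
    then have "1 * norm (h x) \<le> (2 * \<beta> * s - Cl) * norm (h x)"
      by (rule mult_right_mono) simp
    then show ?thesis using key1 by linarith
  qed
  have Clh: "Cl * norm (h x) \<le> \<epsilon>1"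
  proof -
    have "Cl * norm (h x) \<le> (2 * \<beta> * s - Cl) * norm (h x)"
      using b2 by (intro mult_right_mono) auto
    then show ?thesis using key1 by linarith
  qed
  have bh: "\<beta> * norm (h x) \<le> \<epsilon>1 / s"
  proof -
    have "(\<beta> * s) * norm (h x) \<le> (2 * \<beta> * s - Cl) * norm (h x)"
      using b2 by (intro mult_right_mono) auto
    then have "(\<beta> * norm (h x)) * s \<le> \<epsilon>1" using key1 by (simp add: algebra_simps)
    then show ?thesis using s_pos by (simp add: pos_le_divide_eq)
  qed
  have rg: "norm (riem_grad f h x) \<le> 2 * \<epsilon>1" using key2 Clh r_def by simp
  have fr: "x \<in> fullrank_set h"
  proof -
    have "range (Dh h x) = UNIV"
    proof (intro set_eqI iffI)
      fix w :: "real^'m" assume "w \<in> UNIV"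
      define \<mu> where "\<mu> = (\<chi> k. det (\<chi> i j. if j = k then w $ i else Mm h x $ i $ j) / det (Mm h x))"
      have "Mm h x *v \<mu> = w" using cramer[OF dM, of \<mu> w] \<mu>_def by simp
      then have "Dh h x (adjoint (Dh h x) \<mu>) = w" by (simp add: Dh_adj)
      then show "w \<in> range (Dh h x)" by (metis rangeI)
    qed simp
    then show ?thesis unfolding fullrank_set_def by simp
  qed
  define Cphi where "Cphi = onorm (frechet_derivative (\<lambda>y. Blinfun (adjoint (Dh h y))) (at x))"
  define Cpsi where "Cpsi = onorm (frechet_derivative (\<lambda>y. Blinfun (adjoint (frechet_derivative (lam f h) (at y)))) (at x))"
  have Cc: "C_const f h x = 2 * Cphi / s + Cpsi"
    unfolding C_const_def Cphi_def Cpsi_def s_def ..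
  have phi_fd: "frechet_derivative (\<lambda>y. Blinfun (adjoint (Dh h y))) (at x) = (\<lambda>v. \<Sum>i\<in>UNIV. Lc i (hess (\<lambda>y. h y $ i) x v))"
    using frechet_derivative_at[OF phi_deriv[of x]] by simp
  have psi_fd: "frechet_derivative (\<lambda>y. Blinfun (adjoint (frechet_derivative (lam f h) (at y)))) (at x) = (\<lambda>v. \<Sum>i\<in>UNIV. Lc i (hess (lk f h i) x v))"
    using frechet_derivative_at[OF psi_deriv[OF xU]] by simp
  have bl_phi: "bounded_linear (\<lambda>v. \<Sum>i\<in>UNIV. Lc i (hess (\<lambda>y. h y $ i) x v))"
    using phi_deriv[of x] has_derivative_bounded_linear by blast
  have bl_psi: "bounded_linear (\<lambda>v. \<Sum>i\<in>UNIV. Lc i (hess (lk f h i) x v))"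
    using psi_deriv[OF xU] has_derivative_bounded_linear by blast
  have Cphi_nn: "Cphi \<ge> 0" unfolding Cphi_def phi_fd by (rule onorm_pos_le[OF bl_phi])
  have Cpsi_nn: "Cpsi \<ge> 0" unfolding Cpsi_def psi_fd by (rule onorm_pos_le[OF bl_psi])
  have T2b: "\<bar>\<Sum>i\<in>UNIV. h x $ i * (v \<bullet> hess (\<lambda>y. h y $ i) x v)\<bar> \<le> Cphi * (norm v)\<^sup>2 * norm (h x)" for v
  proof -
    let ?L = "(\<Sum>i\<in>UNIV. Lc i (hess (\<lambda>y. h y $ i) x v))"
    have "(\<Sum>i\<in>UNIV. h x $ i * (v \<bullet> hess (\<lambda>y. h y $ i) x v)) = v \<bullet> blinfun_apply ?L (h x)"
      by (simp add: blinfun.sum_left inner_sum_right)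
    also have "\<bar>\<dots>\<bar> \<le> norm v * norm (blinfun_apply ?L (h x))" by (rule Cauchy_Schwarz_ineq2)
    also have "\<dots> \<le> norm v * (norm ?L * norm (h x))" by (intro mult_left_mono norm_blinfun) simp
    also have "\<dots> \<le> norm v * ((Cphi * norm v) * norm (h x))"
      unfolding Cphi_def phi_fd using onorm[OF bl_phi, of v]
      by (intro mult_left_mono mult_right_mono) auto
    finally show ?thesis by (simp add: power2_eq_square algebra_simps)
  qed
  have T1b: "\<bar>\<Sum>i\<in>UNIV. h x $ i * (v \<bullet> hess (lk f h i) x v)\<bar> \<le> Cpsi * (norm v)\<^sup>2 * norm (h x)" for v
  proof -
    let ?L = "(\<Sum>i\<in>UNIV. Lc i (hess (lk f h i) x v))"
    have "(\<Sum>i\<in>UNIV. h x $ i * (v \<bullet> hess (lk f h i) x v)) = v \<bullet> blinfun_apply ?L (h x)"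
      by (simp add: blinfun.sum_left inner_sum_right)
    also have "\<bar>\<dots>\<bar> \<le> norm v * norm (blinfun_apply ?L (h x))" by (rule Cauchy_Schwarz_ineq2)
    also have "\<dots> \<le> norm v * (norm ?L * norm (h x))" by (intro mult_left_mono norm_blinfun) simp
    also have "\<dots> \<le> norm v * ((Cpsi * norm v) * norm (h x))"
      unfolding Cpsi_def psi_fd using onorm[OF bl_psi, of v]
      by (intro mult_left_mono mult_right_mono) auto
    finally show ?thesis by (simp add: power2_eq_square algebra_simps)
  qed
  have hs: "inner v (riem_hess f h x v) \<ge> - (\<epsilon>2 + C_const f h x * \<epsilon>1) * (norm v)\<^sup>2"
    if Dv: "Dh h x v = 0" for v
  proof -
    define S where "S = {w. Dh h x w = 0}"
    have S: "subspace S" unfolding S_def by (rule linear_subspace_kernel[OF lin_Dh])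
    have vS: "v \<in> S" using Dv S_def by simp
    have vi: "v \<bullet> gi h i x = 0" for i using Dh_comp[of x v i] Dv by simp
    have dhv: "frechet_derivative (\<lambda>y. h y $ i) (at x) v = 0" for i
      using grad_inner[OF smo_diff[OF smo_h[of UNIV]], of x i v] vi unfolding gi_def by simp
    define Q where "Q = (\<Sum>i\<in>UNIV. lk f h i x * (v \<bullet> hess (\<lambda>y. h y $ i) x v))"
    define T1 where "T1 = (\<Sum>i\<in>UNIV. h x $ i * (v \<bullet> hess (lk f h i) x v))"
    define T2 where "T2 = (\<Sum>i\<in>UNIV. h x $ i * (v \<bullet> hess (\<lambda>y. h y $ i) x v))"
    have rh: "inner v (riem_hess f h x v) = v \<bullet> hess f x v - Q"
      unfolding riem_hess_def Let_def S_def[symmetric] orth_proj_inner(2)[OF S vS] orth_proj_inner(1)[OF S vS]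
      by (simp add: Q_def lamx Lm_def inner_diff_right inner_sum_right)
    have hg: "v \<bullet> hess (gfun f h \<beta>) x v = v \<bullet> hess f x v - (Q + T1) + 2 * \<beta> * T2"
      unfolding hess_gfun[OF xU]
      by (simp add: Q_def T1_def T2_def inner_diff_right inner_add_right inner_sum_right sum.distrib
          vi dhv)
    have "v \<bullet> hess (gfun f h \<beta>) x v \<ge> - \<epsilon>2 * (norm v)\<^sup>2" using assms(10) by simp
    then have main: "inner v (riem_hess f h x v) \<ge> - \<epsilon>2 * (norm v)\<^sup>2 - \<bar>T1\<bar> - 2 * \<beta> * \<bar>T2\<bar>"
      using rh hg assms(6) by (smt (verit) mult_left_mono abs_ge_self abs_ge_minus_self)
    have "\<bar>T1\<bar> \<le> Cpsi * \<epsilon>1 * (norm v)\<^sup>2"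
    proof -
      have "Cpsi * (norm v)\<^sup>2 * norm (h x) \<le> Cpsi * (norm v)\<^sup>2 * \<epsilon>1"
        using nh Cpsi_nn by (intro mult_left_mono) auto
      then show ?thesis using T1b[of v] unfolding T1_def by (simp add: algebra_simps)
    qed
    moreover have "2 * \<beta> * \<bar>T2\<bar> \<le> 2 * Cphi / s * \<epsilon>1 * (norm v)\<^sup>2"
    proof -
      have "2 * \<beta> * \<bar>T2\<bar> \<le> 2 * \<beta> * (Cphi * (norm v)\<^sup>2 * norm (h x))"
        using T2b[of v] assms(6) unfolding T2_def by (intro mult_left_mono) auto
      also have "\<dots> = 2 * Cphi * (norm v)\<^sup>2 * (\<beta> * norm (h x))" by (simp add: algebra_simps)
      also have "\<dots> \<le> 2 * Cphi * (norm v)\<^sup>2 * (\<epsilon>1 / s)"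
        using bh Cphi_nn by (intro mult_left_mono) auto
      finally show ?thesis by (simp add: algebra_simps)
    qed
    ultimately show ?thesis using main unfolding Cc by (simp add: algebra_simps)
  qed
  show ?thesis unfolding approx_socp_def using fr nh rg hs by auto
qed

end
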